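(* Let $G$ be a connected $2K_2$-free graph containing an induced diamond with vertex set $L_0=\{v_1,v_2,v_3,v_4\}$ and edge set $\{v_1v_2,v_2v_3,v_3v_4,v_4v_1,v_2v_4\}$. Let $L_1$ be the set of vertices of $V(G)\setminus L_0$ having a neighbor in $L_0$, and $L_2=V(G)\setminus(L_0\cup L_1)$. For $i\in\{1,2,3\}$ let $X_i=\{x\in L_1: N(x)\cap L_0=\{v_i\}\}$, and let $Y_1=\{x\in L_1: N(x)\cap L_0=\{v_1,v_2\}\}$, $Y_2=\{x\in L_1: N(x)\cap L_0=\{v_2,v_3\}\}$, $Z_1=\{x\in L_1: N(x)\cap L_0=\{v_1,v_3\}\}$, $Z_2=\{x\in L_1: N(x)\cap L_0=\{v_1,v_2,v_3\}\}$. Then: (1) $V(G)=N(v_4)\cup\{v_4\}\cup X_1\cup X_2\cup X_3\cup Y_1\cup Y_2\cup Z_1\cup Z_2\cup L_2$; (2) $X_1=\emptyset$ or $X_3=\emptyset$; (3) $X_1\cup X_2\cup Y_1$, $Y_2$, $Z_1$ and $L_2$ are independent sets; (4) there are no edges between $X_1\cup X_2\cup X_3\cup Y_1\cup Y_2\cup Z_1$ and $L_2$.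
   Context: All graphs are finite, simple and undirected. $2K_2$ is the disjoint union of two edges; $G$ is $2K_2$-free if it has no induced subgraph isomorphic to $2K_2$. $N(x)$ is the set of neighbors of $x$. A diamond is $K_4$ minus an edge. *)

theory Defs
  imports Main
begin

definition simple_graph :: "'a set \<Rightarrow> ('a \<Rightarrow> 'a \<Rightarrow> bool) \<Rightarrow> bool" where
  "simple_graph V E \<longleftrightarrow> finite V \<and> (\<forall>x y. E x y \<longrightarrow> x \<in> V \<and> y \<in> V)
     \<and> (\<forall>x y. E x y \<longrightarrow> E y x) \<and> (\<forall>x. \<not> E x x)"

definition connected_graph :: "'a set \<Rightarrow> ('a \<Rightarrow> 'a \<Rightarrow> bool) \<Rightarrow> bool" where
  "connected_graph V E \<longleftrightarrow> (\<forall>x\<in>V. \<forall>y\<in>V. E\<^sup>*\<^sup>* x y)"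

definition nbhd :: "'a set \<Rightarrow> ('a \<Rightarrow> 'a \<Rightarrow> bool) \<Rightarrow> 'a \<Rightarrow> 'a set" where
  "nbhd V E x = {y \<in> V. E x y}"

definition two_K2_free :: "'a set \<Rightarrow> ('a \<Rightarrow> 'a \<Rightarrow> bool) \<Rightarrow> bool" where
  "two_K2_free V E \<longleftrightarrow> \<not> (\<exists>a\<in>V. \<exists>b\<in>V. \<exists>c\<in>V. \<exists>d\<in>V.
      distinct [a, b, c, d] \<and> E a b \<and> E c d \<and>
      \<not> E a c \<and> \<not> E a d \<and> \<not> E b c \<and> \<not> E b d)"

definition independent_set :: "('a \<Rightarrow> 'a \<Rightarrow> bool) \<Rightarrow> 'a set \<Rightarrow> bool" where
  "independent_set E S \<longleftrightarrow> (\<forall>x\<in>S. \<forall>y\<in>S. \<not> E x y)"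

end

theory Submission
  imports Defs
begin

lemma noK: "two_K2_free V E \<Longrightarrow> a\<in>V \<Longrightarrow> b\<in>V \<Longrightarrow> c\<in>V \<Longrightarrow> d\<in>V \<Longrightarrow>
  distinct [a,b,c,d] \<Longrightarrow> E a b \<Longrightarrow> E c d \<Longrightarrow> \<not> E a c \<Longrightarrow> \<not> E a d \<Longrightarrow> \<not> E b c \<Longrightarrow> \<not> E b d \<Longrightarrow> False"
  unfolding two_K2_free_def by blast

lemma four: "({y\<in>{a,b,c,d}. P y} = S) \<longleftrightarrow> S \<subseteq> {a,b,c,d} \<and> (a\<in>S \<longleftrightarrow> P a) \<and> (b\<in>S \<longleftrightarrow> P b) \<and> (c\<in>S \<longleftrightarrow> P c) \<and> (d\<in>S \<longleftrightarrow> P d)"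
  by blast

theorem lemma3p6:
  fixes V :: "'a set" and E :: "'a \<Rightarrow> 'a \<Rightarrow> bool" and v1 v2 v3 v4 :: 'a
  assumes graph: "simple_graph V E"
    and conn: "connected_graph V E"
    and free: "two_K2_free V E"
    and verts: "v1 \<in> V" "v2 \<in> V" "v3 \<in> V" "v4 \<in> V" "distinct [v1, v2, v3, v4]"
    and diamond: "E v1 v2" "E v2 v3" "E v3 v4" "E v4 v1" "E v2 v4" "\<not> E v1 v3"
  defines "L0 \<equiv> {v1, v2, v3, v4}"
  defines "L1 \<equiv> {x \<in> V - L0. \<exists>v\<in>L0. E x v}"
  defines "L2 \<equiv> V - (L0 \<union> L1)"
  defines "X1 \<equiv> {x \<in> L1. nbhd V E x \<inter> L0 = {v1}}"
  defines "X2 \<equiv> {x \<in> L1. nbhd V E x \<inter> L0 = {v2}}"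
  defines "X3 \<equiv> {x \<in> L1. nbhd V E x \<inter> L0 = {v3}}"
  defines "Y1 \<equiv> {x \<in> L1. nbhd V E x \<inter> L0 = {v1, v2}}"
  defines "Y2 \<equiv> {x \<in> L1. nbhd V E x \<inter> L0 = {v2, v3}}"
  defines "Z1 \<equiv> {x \<in> L1. nbhd V E x \<inter> L0 = {v1, v3}}"
  defines "Z2 \<equiv> {x \<in> L1. nbhd V E x \<inter> L0 = {v1, v2, v3}}"
  shows "(V = nbhd V E v4 \<union> {v4} \<union> X1 \<union> X2 \<union> X3 \<union> Y1 \<union> Y2 \<union> Z1 \<union> Z2 \<union> L2)
    \<and> (X1 = {} \<or> X3 = {})
    \<and> (independent_set E (X1 \<union> X2 \<union> Y1) \<and> independent_set E Y2
       \<and> independent_set E Z1 \<and> independent_set E L2)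
    \<and> (\<forall>x\<in>X1 \<union> X2 \<union> X3 \<union> Y1 \<union> Y2 \<union> Z1. \<forall>y\<in>L2. \<not> E x y)"
proof -
  have sym: "\<And>x y. E x y \<Longrightarrow> E y x" and inV: "\<And>x y. E x y \<Longrightarrow> x \<in> V \<and> y \<in> V"
    and irr: "\<And>x. \<not> E x x" using graph unfolding simple_graph_def by blast+
  have nb: "\<And>x. nbhd V E x \<inter> L0 = {y\<in>L0. E x y}" using verts unfolding nbhd_def L0_def by auto
  have d: "v1 \<noteq> v2" "v1 \<noteq> v3" "v1 \<noteq> v4" "v2 \<noteq> v3" "v2 \<noteq> v4" "v3 \<noteq> v4" using verts(5) by auto
  have mL1: "\<And>x. x \<in> L1 \<longleftrightarrow> x \<in> V \<and> x \<noteq> v1 \<and> x \<noteq> v2 \<and> x \<noteq> v3 \<and> x \<noteq> v4 \<and> (E x v1 \<or> E x v2 \<or> E x v3 \<or> E x v4)"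
    unfolding L1_def L0_def by auto
  have mX1: "\<And>x. x \<in> X1 \<longleftrightarrow> x \<in> L1 \<and> E x v1 \<and> \<not> E x v2 \<and> \<not> E x v3 \<and> \<not> E x v4"
    unfolding X1_def nb unfolding L0_def four using d by auto
  have mX2: "\<And>x. x \<in> X2 \<longleftrightarrow> x \<in> L1 \<and> \<not> E x v1 \<and> E x v2 \<and> \<not> E x v3 \<and> \<not> E x v4"
    unfolding X2_def nb unfolding L0_def four using d by auto
  have mX3: "\<And>x. x \<in> X3 \<longleftrightarrow> x \<in> L1 \<and> \<not> E x v1 \<and> \<not> E x v2 \<and> E x v3 \<and> \<not> E x v4"
    unfolding X3_def nb unfolding L0_def four using d by auto
  have mY1: "\<And>x. x \<in> Y1 \<longleftrightarrow> x \<in> L1 \<and> E x v1 \<and> E x v2 \<and> \<not> E x v3 \<and> \<not> E x v4"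
    unfolding Y1_def nb unfolding L0_def four using d by auto
  have mY2: "\<And>x. x \<in> Y2 \<longleftrightarrow> x \<in> L1 \<and> \<not> E x v1 \<and> E x v2 \<and> E x v3 \<and> \<not> E x v4"
    unfolding Y2_def nb unfolding L0_def four using d by auto
  have mZ1: "\<And>x. x \<in> Z1 \<longleftrightarrow> x \<in> L1 \<and> E x v1 \<and> \<not> E x v2 \<and> E x v3 \<and> \<not> E x v4"
    unfolding Z1_def nb unfolding L0_def four using d by auto
  have mZ2: "\<And>x. x \<in> Z2 \<longleftrightarrow> x \<in> L1 \<and> E x v1 \<and> E x v2 \<and> E x v3 \<and> \<not> E x v4"
    unfolding Z2_def nb unfolding L0_def four using d by auto
  have mL2: "\<And>x. x \<in> L2 \<longleftrightarrow> x \<in> V \<and> x \<noteq> v1 \<and> x \<noteq> v2 \<and> x \<noteq> v3 \<and> x \<noteq> v4 \<and> \<not> E x v1 \<and> \<not> E x v2 \<and> \<not> E x v3 \<and> \<not> E x v4"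
    using mL1 unfolding L2_def L0_def by auto
  have p1: "V = nbhd V E v4 \<union> {v4} \<union> X1 \<union> X2 \<union> X3 \<union> Y1 \<union> Y2 \<union> Z1 \<union> Z2 \<union> L2"
  proof
    show "V \<subseteq> nbhd V E v4 \<union> {v4} \<union> X1 \<union> X2 \<union> X3 \<union> Y1 \<union> Y2 \<union> Z1 \<union> Z2 \<union> L2"
    proof
      fix x assume x: "x \<in> V"
      show "x \<in> nbhd V E v4 \<union> {v4} \<union> X1 \<union> X2 \<union> X3 \<union> Y1 \<union> Y2 \<union> Z1 \<union> Z2 \<union> L2"
      proof (cases "x = v4 \<or> E v4 x")
        case True then show ?thesis using x unfolding nbhd_def by blast
      next
        case False
        then have n: "x \<noteq> v4" "\<not> E x v4" "x \<noteq> v1" "x \<noteq> v2" "x \<noteq> v3" using sym diamond by blast+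
        show ?thesis
        proof (cases "E x v1 \<or> E x v2 \<or> E x v3")
          case False then have "x \<in> L2" unfolding mL2 using x n by blast
          then show ?thesis by blast
        next
          case True
          then have l1: "x \<in> L1" unfolding mL1 using x n by blast
          show ?thesis
            apply (cases "E x v1"; cases "E x v2"; cases "E x v3")
            using l1 n True unfolding Un_iff mX1 mX2 mX3 mY1 mY2 mZ1 mZ2 by simp_all
        qed
      qed
    qed
    have s: "L1 \<subseteq> V" unfolding L1_def by blast
    show "nbhd V E v4 \<union> {v4} \<union> X1 \<union> X2 \<union> X3 \<union> Y1 \<union> Y2 \<union> Z1 \<union> Z2 \<union> L2 \<subseteq> V"
      using verts s unfolding nbhd_def X1_def X2_def X3_def Y1_def Y2_def Z1_def Z2_def L2_def by blast
  qed
  note K = noK[OF free]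
  have p2: "X1 = {} \<or> X3 = {}"
  proof (rule ccontr)
    assume "\<not> ?thesis"
    then obtain a b where a: "a \<in> X1" and b: "b \<in> X3" by blast
    have aa: "a \<in> V" "a \<noteq> v1" "a \<noteq> v2" "a \<noteq> v3" "a \<noteq> v4" "E a v1" "\<not> E a v2" "\<not> E a v3" "\<not> E a v4"
      using a by (auto simp: mX1 mL1)
    have bb: "b \<in> V" "b \<noteq> v1" "b \<noteq> v2" "b \<noteq> v3" "b \<noteq> v4" "\<not> E b v1" "\<not> E b v2" "E b v3" "\<not> E b v4"
      using b by (auto simp: mX3 mL1)
    have ab: "a \<noteq> b" using aa bb by auto
    show False
    proof (cases "E a b")
      case True
      show False using K[of a b v2 v4] aa bb ab True verts diamond sym by auto
    next
      case False
      show False using K[of a v1 b v3] aa bb ab False verts diamond sym by auto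
    qed
  qed
  have p3a: "independent_set E (X1 \<union> X2 \<union> Y1)" unfolding independent_set_def
  proof (intro ballI notI)
    fix a b assume a: "a \<in> X1 \<union> X2 \<union> Y1" and b: "b \<in> X1 \<union> X2 \<union> Y1" and e: "E a b"
    have aa: "a \<in> V" "a \<noteq> v1" "a \<noteq> v2" "a \<noteq> v3" "a \<noteq> v4" "\<not> E a v3" "\<not> E a v4"
      using a by (auto simp: mX1 mX2 mY1 mL1)
    have bb: "b \<in> V" "b \<noteq> v1" "b \<noteq> v2" "b \<noteq> v3" "b \<noteq> v4" "\<not> E b v3" "\<not> E b v4"
      using b by (auto simp: mX1 mX2 mY1 mL1)
    have "a \<noteq> b" using e irr by auto
    then show False using K[of a b v3 v4] aa bb e verts diamond sym by auto
  qed
  have p3b: "independent_set E Y2" unfolding independent_set_def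
  proof (intro ballI notI)
    fix a b assume a: "a \<in> Y2" and b: "b \<in> Y2" and e: "E a b"
    have aa: "a \<in> V" "a \<noteq> v1" "a \<noteq> v2" "a \<noteq> v3" "a \<noteq> v4" "\<not> E a v1" "\<not> E a v4"
      using a by (auto simp: mY2 mL1)
    have bb: "b \<in> V" "b \<noteq> v1" "b \<noteq> v2" "b \<noteq> v3" "b \<noteq> v4" "\<not> E b v1" "\<not> E b v4"
      using b by (auto simp: mY2 mL1)
    have "a \<noteq> b" using e irr by auto
    then show False using K[of a b v1 v4] aa bb e verts diamond sym by auto
  qed
  have p3c: "independent_set E Z1" unfolding independent_set_def
  proof (intro ballI notI)
    fix a b assume a: "a \<in> Z1" and b: "b \<in> Z1" and e: "E a b"
    have aa: "a \<in> V" "a \<noteq> v1" "a \<noteq> v2" "a \<noteq> v3" "a \<noteq> v4" "\<not> E a v2" "\<not> E a v4"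
      using a by (auto simp: mZ1 mL1)
    have bb: "b \<in> V" "b \<noteq> v1" "b \<noteq> v2" "b \<noteq> v3" "b \<noteq> v4" "\<not> E b v2" "\<not> E b v4"
      using b by (auto simp: mZ1 mL1)
    have "a \<noteq> b" using e irr by auto
    then show False using K[of a b v2 v4] aa bb e verts diamond sym by auto
  qed
  have p3d: "independent_set E L2" unfolding independent_set_def
  proof (intro ballI notI)
    fix a b assume a: "a \<in> L2" and b: "b \<in> L2" and e: "E a b"
    have aa: "a \<in> V" "a \<noteq> v1" "a \<noteq> v2" "a \<noteq> v3" "a \<noteq> v4" "\<not> E a v1" "\<not> E a v2"
      using a by (auto simp: mL2)
    have bb: "b \<in> V" "b \<noteq> v1" "b \<noteq> v2" "b \<noteq> v3" "b \<noteq> v4" "\<not> E b v1" "\<not> E b v2"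
      using b by (auto simp: mL2)
    have "a \<noteq> b" using e irr by auto
    then show False using K[of a b v1 v2] aa bb e verts diamond sym by auto
  qed
  have p4: "\<forall>x\<in>X1 \<union> X2 \<union> X3 \<union> Y1 \<union> Y2 \<union> Z1. \<forall>y\<in>L2. \<not> E x y"
  proof (intro ballI notI)
    fix a b assume a: "a \<in> X1 \<union> X2 \<union> X3 \<union> Y1 \<union> Y2 \<union> Z1" and b: "b \<in> L2" and e: "E a b"
    have bb: "b \<in> V" "b \<noteq> v1" "b \<noteq> v2" "b \<noteq> v3" "b \<noteq> v4" "\<not> E b v1" "\<not> E b v2" "\<not> E b v3" "\<not> E b v4"
      using b by (auto simp: mL2)
    have ab: "a \<noteq> b" using e irr by auto
    have av: "a \<in> V" "a \<noteq> v1" "a \<noteq> v2" "a \<noteq> v3" "a \<noteq> v4" using a by (auto simp: mX1 mX2 mX3 mY1 mY2 mZ1 mL1)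
    from a show False unfolding Un_iff
    proof (elim disjE)
      assume "a \<in> X1" then show False using K[of a b v2 v3] av bb ab e verts diamond sym unfolding mX1 by auto
    next
      assume "a \<in> X2" then show False using K[of a b v1 v4] av bb ab e verts diamond sym unfolding mX2 by auto
    next
      assume "a \<in> X3" then show False using K[of a b v1 v2] av bb ab e verts diamond sym unfolding mX3 by auto
    next
      assume "a \<in> Y1" then show False using K[of a b v3 v4] av bb ab e verts diamond sym unfolding mY1 by auto
    next
      assume "a \<in> Y2" then show False using K[of a b v1 v4] av bb ab e verts diamond sym unfolding mY2 by auto
    next
      assume "a \<in> Z1" then show False using K[of a b v2 v4] av bb ab e verts diamond sym unfolding mZ1 by auto
    qed
  qed
  show ?thesis using p1 p2 p3a p3b p3c p3d p4 by blast
qed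
end
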